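(* Let $k\ge1$ be an integer, $r>0$, $\alpha,\beta>0$, and let $(X,\rho)$ be a finite semimetric space with the counting measure $\mu(A)=|A|$ such that $$T_{k+1}(X)\le \frac{\beta|X|^{k+1}}{(k+1)!}\qquad\text{and}\qquad T_k(X)\ge \frac{\alpha|X|^k}{k!}.$$ Let $X=\bigsqcup_{i=1}^n Z_i$ be any greedy cluster partition of $X$ with associated sets $X_i\subseteq Z_i$, and let $I_1=\{i\in\{1,\dots,n\}: (k+1)|X_i|\le |Z_i|\}$. Then $$\sum_{i\in I_1}|Z_i|\le \frac{(k+1)\beta}{\alpha}|X|.$$
   Context: A finite semimetric space $(X,\rho)$: $\rho$ is a nonnegative symmetric function on $X\times X$ with $\rho(x,x)=0$ satisfying the triangle inequality, where distinct points may be at distance $0$. A $2r$-cluster is a subset of diameter at most $2r$. For $x\in X$ and nonempty $A\subseteq X$, $\rho(x,A)=\min_{a\in A}\rho(x,a)$. For an integer $m\ge1$, $T_m(X)=\frac{1}{m!}\,\#\{(x_1,\dots,x_m)\in X^m:\rho(x_i,x_j)>r \text{ for all } 1\le i<j\le m\}$. Greedy cluster partition: let $X_1$ be a $2r$-cluster of maximal cardinality in $X$ (any one, if several) and $Z_1=\{x\in X:\rho(x,X_1)<r\}$. Given pairwise disjoint $Z_1,\dots,Z_m$ with $R_m=X\setminus\bigcup_{i\le m}Z_i\neq\emptyset$, let $X_{m+1}$ be a $2r$-cluster of maximal cardinality among subsets of $R_m$, and $Z_{m+1}=\{x\in R_m:\rho(x,X_{m+1})<r\}$. The procedure stops when the $Z_i$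 cover $X$, giving $X=\bigsqcup_{i=1}^n Z_i$. *)

theory Defs
  imports Complex_Main
begin

definition semimetric_on :: "'a set \<Rightarrow> ('a \<Rightarrow> 'a \<Rightarrow> real) \<Rightarrow> bool" where
  "semimetric_on X rho \<longleftrightarrow>
     (\<forall>x\<in>X. \<forall>y\<in>X. rho x y \<ge> 0 \<and> rho x y = rho y x) \<and>
     (\<forall>x\<in>X. rho x x = 0) \<and>
     (\<forall>x\<in>X. \<forall>y\<in>X. \<forall>z\<in>X. rho x z \<le> rho x y + rho y z)"

definition cluster_in :: "('a \<Rightarrow> 'a \<Rightarrow> real) \<Rightarrow> real \<Rightarrow> 'a set \<Rightarrow> 'a set \<Rightarrow> bool" where
  "cluster_in rho r S A \<longleftrightarrow> A \<subseteq> S \<and> (\<forall>a\<in>A. \<forall>b\<in>A. rho a b \<le> 2 * r)"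

definition max_cluster_in :: "('a \<Rightarrow> 'a \<Rightarrow> real) \<Rightarrow> real \<Rightarrow> 'a set \<Rightarrow> 'a set \<Rightarrow> bool" where
  "max_cluster_in rho r S A \<longleftrightarrow> cluster_in rho r S A \<and>
     (\<forall>B. cluster_in rho r S B \<longrightarrow> card B \<le> card A)"

definition set_dist :: "('a \<Rightarrow> 'a \<Rightarrow> real) \<Rightarrow> 'a \<Rightarrow> 'a set \<Rightarrow> real" where
  "set_dist rho x A = Min ((\<lambda>a. rho x a) ` A)"

definition T_count :: "'a set \<Rightarrow> ('a \<Rightarrow> 'a \<Rightarrow> real) \<Rightarrow> real \<Rightarrow> nat \<Rightarrow> real" where
  "T_count X rho r m = real (card {xs. length xs = m \<and> set xs \<subseteq> X \<and>
       (\<forall>i<m. \<forall>j<m. i < j \<longrightarrow> rho (xs ! i) (xs ! j) > r)}) / fact m"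

definition greedy_cluster_partition ::
  "'a set \<Rightarrow> ('a \<Rightarrow> 'a \<Rightarrow> real) \<Rightarrow> real \<Rightarrow> nat \<Rightarrow> (nat \<Rightarrow> 'a set) \<Rightarrow> (nat \<Rightarrow> 'a set) \<Rightarrow> bool" where
  "greedy_cluster_partition X rho r n Xs Zs \<longleftrightarrow>
     (\<forall>i\<in>{1..n}.
        (let R = X - (\<Union>j\<in>{1..<i}. Zs j) in
           R \<noteq> {} \<and> max_cluster_in rho r R (Xs i) \<and>
           Zs i = {x\<in>R. set_dist rho x (Xs i) < r})) \<and>
     X = (\<Union>i\<in>{1..n}. Zs i)"

end

theory Submission
  imports Defs
begin

theorem mainTheorem2:
  fixes X :: "'a set" and rho :: "'a \<Rightarrow> 'a \<Rightarrow> real"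
    and r \<alpha> \<beta> :: real and k n :: nat and Xs Zs :: "nat \<Rightarrow> 'a set"
  assumes "k \<ge> 1" and "r > 0" and "\<alpha> > 0" and "\<beta> > 0"
    and "finite X" and "semimetric_on X rho"
    and "T_count X rho r (k + 1) \<le> \<beta> * real (card X) ^ (k + 1) / fact (k + 1)"
    and "T_count X rho r k \<ge> \<alpha> * real (card X) ^ k / fact k"
    and "greedy_cluster_partition X rho r n Xs Zs"
  shows "(\<Sum>i\<in>{i\<in>{1..n}. (k + 1) * card (Xs i) \<le> card (Zs i)}. real (card (Zs i)))
           \<le> real (k + 1) * \<beta> / \<alpha> * real (card X)"
proof -
  note fin = assms(5)
  note sm = assms(6)[unfolded semimetric_on_def]
  note gp = assms(9)[unfolded greedy_cluster_partition_def]
  define Sep where "Sep m = {xs. length xs = m \<and> set xs \<subseteq> X \<and>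
       (\<forall>i<m. \<forall>j<m. i < j \<longrightarrow> rho (xs ! i) (xs ! j) > r)}" for m
  define I1 where "I1 = {i\<in>{1..n}. (k + 1) * card (Xs i) \<le> card (Zs i)}"
  define U where "U = (\<Union>i\<in>I1. Zs i)"
  define Good where "Good xs = {z\<in>U. \<forall>j<k. r < rho (xs!j) z}" for xs
  define S where "S = (\<Sum>i\<in>I1. card (Zs i))"
  have finSep: "finite (Sep m)" for m
  proof -
    have "Sep m \<subseteq> {xs. set xs \<subseteq> X \<and> length xs = m}" unfolding Sep_def by auto
    thus ?thesis using finite_lists_length_eq[OF fin] finite_subset by blast
  qed
  have gi: "R \<noteq> {} \<and> max_cluster_in rho r R (Xs i) \<and> Zs i = {x\<in>R. set_dist rho x (Xs i) < r}"
    if "i \<in> {1..n}" and "R = X - (\<Union>j\<in>{1..<i}. Zs j)" for i R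
    using gp that unfolding Let_def by blast
  have ZR: "i \<in> {1..n} \<Longrightarrow> Zs i \<subseteq> X - (\<Union>j\<in>{1..<i}. Zs j)" for i
  proof -
    assume "i \<in> {1..n}"
    from gi[OF this refl] show ?thesis by (metis (no_types, lifting) mem_Collect_eq subsetI)
  qed
  have ZX: "i \<in> {1..n} \<Longrightarrow> Zs i \<subseteq> X" for i using ZR by blast
  have maxc: "i \<in> {1..n} \<Longrightarrow> max_cluster_in rho r (X - (\<Union>j\<in>{1..<i}. Zs j)) (Xs i)" for i
    using gi by blast
  have disj: "i \<in> {1..n} \<Longrightarrow> j \<in> {1..n} \<Longrightarrow> i \<noteq> j \<Longrightarrow> Zs i \<inter> Zs j = {}" for i j
  proof -
    assume a: "i \<in> {1..n}" "j \<in> {1..n}" "i \<noteq> j"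
    show ?thesis
    proof (cases "i < j")
      case True thus ?thesis using ZR[OF a(2)] a(1) by auto
    next
      case False hence "j < i" using a by auto
      thus ?thesis using ZR[OF a(1)] a(2) by auto
    qed
  qed
  have I1sub: "I1 \<subseteq> {1..n}" unfolding I1_def by auto
  have finZ: "i \<in> {1..n} \<Longrightarrow> finite (Zs i)" for i using ZX fin finite_subset by blast
  have UX: "U \<subseteq> X" unfolding U_def using ZX I1sub by blast
  have goodbound: "S \<le> (k+1) * card (Good xs)" if xs: "xs \<in> Sep k" for xs
  proof -
    have xsX: "j < k \<Longrightarrow> xs ! j \<in> X" for j using xs unfolding Sep_def by auto
    define G where "G i = {z\<in>Zs i. \<forall>j<k. r < rho (xs!j) z}" for i
    have GoodU: "Good xs = (\<Union>i\<in>I1. G i)" unfolding Good_def G_def U_def by auto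
    have cardGood: "card (Good xs) = (\<Sum>i\<in>I1. card (G i))"
      unfolding GoodU
    proof (rule card_UN_disjoint)
      show "finite I1" using I1sub finite_subset by blast
      show "\<forall>i\<in>I1. finite (G i)" using finZ I1sub unfolding G_def by auto
      show "\<forall>i\<in>I1. \<forall>j\<in>I1. i \<noteq> j \<longrightarrow> G i \<inter> G j = {}"
        using disj I1sub unfolding G_def by blast
    qed
    have per: "card (Zs i) \<le> (k+1) * card (G i)" if i: "i \<in> I1" for i
    proof -
      have i1: "i \<in> {1..n}" using i I1sub by auto
      define B where "B j = {z\<in>Zs i. rho (xs!j) z \<le> r}" for j
      have Zeq: "Zs i = G i \<union> (\<Union>j\<in>{..<k}. B j)" unfolding G_def B_def by auto
      have Bc: "card (B j) \<le> card (Xs i)" if j: "j < k" for j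
      proof -
        have "cluster_in rho r (X - (\<Union>j\<in>{1..<i}. Zs j)) (B j)"
          unfolding cluster_in_def
        proof
          show "B j \<subseteq> X - (\<Union>j\<in>{1..<i}. Zs j)" using ZR[OF i1] unfolding B_def by auto
          show "\<forall>a\<in>B j. \<forall>b\<in>B j. rho a b \<le> 2 * r"
          proof (intro ballI)
            fix a b assume ab: "a \<in> B j" "b \<in> B j"
            have aX: "a \<in> X" and bX: "b \<in> X" using ab ZX[OF i1] unfolding B_def by auto
            have x: "xs ! j \<in> X" using xsX j .
            have "rho a b \<le> rho a (xs!j) + rho (xs!j) b" using sm aX bX x by blast
            moreover have "rho a (xs!j) = rho (xs!j) a" using sm aX x by blast
            ultimately show "rho a b \<le> 2 * r" using ab unfolding B_def by auto
          qed
        qed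
        thus ?thesis using maxc[OF i1] unfolding max_cluster_in_def by blast
      qed
      have "card (Zs i) \<le> card (G i) + card (\<Union>j\<in>{..<k}. B j)"
        unfolding Zeq by (rule card_Un_le)
      also have "card (\<Union>j\<in>{..<k}. B j) \<le> (\<Sum>j<k. card (B j))" by (rule card_UN_le) simp
      also have "(\<Sum>j<k. card (B j)) \<le> (\<Sum>j<k. card (Xs i))" by (rule sum_mono) (use Bc in auto)
      finally have c1: "card (Zs i) \<le> card (G i) + k * card (Xs i)" by simp
      have c2: "(k+1) * card (Xs i) \<le> card (Zs i)" using i unfolding I1_def by auto
      have "(k+1) * card (Zs i) \<le> (k+1) * card (G i) + k * ((k+1) * card (Xs i))"
        using c1 by (metis add_mult_distrib2 mult.left_commute mult_le_mono2)
      also have "\<dots> \<le> (k+1) * card (G i) + k * card (Zs i)" using c2 by simp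
      finally show ?thesis by simp
    qed
    have "S \<le> (\<Sum>i\<in>I1. (k+1) * card (G i))" unfolding S_def by (rule sum_mono) (rule per)
    also have "\<dots> = (k+1) * card (Good xs)" by (simp add: cardGood sum_distrib_left)
    finally show ?thesis .
  qed
  have finGood: "finite (Good xs)" for xs
  proof -
    have "Good xs \<subseteq> X" using UX unfolding Good_def by auto
    thus ?thesis using fin by (rule finite_subset)
  qed
  have inj: "inj_on (\<lambda>(xs, z). xs @ [z]) (Sigma (Sep k) Good)"
    unfolding inj_on_def by auto
  have img: "(\<lambda>(xs, z). xs @ [z]) ` (Sigma (Sep k) Good) \<subseteq> Sep (k+1)"
  proof clarify
    fix xs z assume xs: "xs \<in> Sep k" and z: "z \<in> Good xs"
    have lx: "length xs = k" using xs unfolding Sep_def by auto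
    have zX: "z \<in> X" using z UX unfolding Good_def by auto
    show "xs @ [z] \<in> Sep (k+1)"
      unfolding Sep_def
    proof (intro CollectI conjI allI impI)
      show "length (xs @ [z]) = k + 1" using lx by simp
      show "set (xs @ [z]) \<subseteq> X" using xs zX unfolding Sep_def by auto
      fix i j assume ij: "i < k + 1" "j < k + 1" "i < j"
      show "r < rho ((xs @ [z]) ! i) ((xs @ [z]) ! j)"
      proof (cases "j = k")
        case True
        thus ?thesis using ij z lx unfolding Good_def by (simp add: nth_append)
      next
        case False
        hence "j < k" using ij by simp
        thus ?thesis using ij xs lx unfolding Sep_def by (simp add: nth_append)
      qed
    qed
  qed
  have cardSig: "card (Sigma (Sep k) Good) \<le> card (Sep (k+1))"
    using card_inj_on_le[OF inj img finSep] .
  have "card (Sep k) * S \<le> (k+1) * card (Sigma (Sep k) Good)"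
  proof -
    have "card (Sep k) * S = (\<Sum>xs\<in>Sep k. S)" by simp
    also have "\<dots> \<le> (\<Sum>xs\<in>Sep k. (k+1) * card (Good xs))" by (rule sum_mono) (rule goodbound)
    also have "\<dots> = (k+1) * card (Sigma (Sep k) Good)"
      using finSep finGood by (simp add: card_SigmaI sum_distrib_left)
    finally show ?thesis .
  qed
  hence key: "card (Sep k) * S \<le> (k+1) * card (Sep (k+1))" using cardSig
    by (meson le_trans mult_le_mono2)
  have Tk: "T_count X rho r m = real (card (Sep m)) / fact m" for m
    unfolding T_count_def Sep_def by simp
  define N where "N = real (card X)"
  have f1: "(0::real) < fact (k+1)" and f2: "(0::real) < fact k" by simp_all
  have A1: "real (card (Sep (k+1))) \<le> \<beta> * N ^ (k+1)"
  proof -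
    have "real (card (Sep (k+1))) / fact (k+1) \<le> \<beta> * N ^ (k+1) / fact (k+1)"
      using assms(7) unfolding Tk N_def .
    thus ?thesis using f1 by (simp only: divide_le_cancel)
  qed
  have A2: "\<alpha> * N ^ k \<le> real (card (Sep k))"
  proof -
    have "\<alpha> * N ^ k / fact k \<le> real (card (Sep k)) / fact k"
      using assms(8) unfolding Tk N_def .
    thus ?thesis using f2 by (simp only: divide_le_cancel)
  qed
  have keyr: "real (card (Sep k)) * real S \<le> real (k+1) * real (card (Sep (k+1)))"
    using key by (metis of_nat_le_iff of_nat_mult)
  have LHS: "(\<Sum>i\<in>{i\<in>{1..n}. (k + 1) * card (Xs i) \<le> card (Zs i)}. real (card (Zs i))) = real S"
    unfolding S_def I1_def by simp
  show ?thesis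
  proof (cases "card X = 0")
    case True
    hence "X = {}" using fin by simp
    hence "S = 0" unfolding S_def using ZX I1sub by (auto intro!: sum.neutral)
    thus ?thesis using LHS True by simp
  next
    case False
    hence Np: "N > 0" unfolding N_def by simp
    have S0: "real S \<ge> 0" by simp
    have "\<alpha> * N ^ k * real S \<le> real (card (Sep k)) * real S" using A2 S0 by (rule mult_right_mono)
    also have "\<dots> \<le> real (k+1) * real (card (Sep (k+1)))" by (rule keyr)
    also have "\<dots> \<le> real (k+1) * (\<beta> * N ^ (k+1))" using A1 by simp
    finally have "\<alpha> * N ^ k * real S \<le> real (k+1) * \<beta> * N * N ^ k" by (simp add: algebra_simps)
    hence "\<alpha> * real S \<le> real (k+1) * \<beta> * N" using Np
      by (smt (verit) mult.commute mult.left_commute mult_le_cancel_right zero_less_power)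
    hence "real S \<le> real (k+1) * \<beta> / \<alpha> * N" using assms(3)
      by (simp add: field_simps)
    thus ?thesis using LHS N_def by simp
  qed
qed

end
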